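(* For every indecomposable instrument $\mathcal{I}\in\mathrm{Ins}(\Omega,\mathcal{H},\mathcal{K})$ there exists a dilation $(\mathcal{H}_A,W,\mathsf{E})$ of $\mathcal{I}$ such that the complementary instrument $\mathcal{I}^C\in\mathrm{Ins}(\Omega,\mathcal{H},\mathcal{H}_A)$ relative to it is the measure-and-prepare instrument $\mathcal{I}^C_x(\varrho)=\mathrm{tr}[\mathsf{A}^{\mathcal{I}}(x)\varrho]\,|\varphi_x\rangle\langle\varphi_x|$ for all $x\in\Omega$ and states $\varrho$, for some orthonormal basis $\{\varphi_x\}_{x\in\Omega}$ of $\mathcal{H}_A$.
   Context: All Hilbert spaces are finite-dimensional and complex, and all outcome sets are finite. A POVM $\mathsf{E}\in\mathcal{O}(\Omega,\mathcal{H})$ is a map $x\mapsto\mathsf{E}(x)$ to positive operators with $\sum_x\mathsf{E}(x)=I$. An instrument $\mathcal{I}\in\mathrm{Ins}(\Omega,\mathcal{H},\mathcal{K})$ is a family $(\mathcal{I}_x)_{x\in\Omega}$ of completely positive trace-nonincreasing linear maps $\mathcal{L}(\mathcal{H})\to\mathcal{L}(\mathcal{K})$ whose sum is trace preserving; its induced POVM is given by $\mathrm{tr}[\mathsf{A}^{\mathcal{I}}(x)\varrho]=\mathrm{tr}[\mathcal{I}_x(\varrho)]$. $\mathcal{I}$ is indecomposable if each nonzero $\mathcal{I}_x$ has Kraus rank 1, i.e. $\mathcal{I}_x(\varrho)=K_x\varrho K_x^*$ for an operator $K_x:\mathcal{H}\to\mathcal{K}$. A dilation of $\mathcal{I}$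 is a triple $(\mathcal{H}_A,W,\mathsf{E})$ with $W:\mathcal{H}\to\mathcal{H}_A\otimes\mathcal{K}$ an isometry and $\mathsf{E}\in\mathcal{O}(\Omega,\mathcal{H}_A)$ such that $\mathcal{I}_x(\varrho)=\mathrm{tr}_{\mathcal{H}_A}[W\varrho W^*(\mathsf{E}(x)\otimes I_{\mathcal{K}})]$; the complementary instrument relative to it is $\mathcal{I}^C_x(\varrho)=\mathrm{tr}_{\mathcal{K}}[(\sqrt{\mathsf{E}(x)}\otimes I_{\mathcal{K}})W\varrho W^*(\sqrt{\mathsf{E}(x)}\otimes I_{\mathcal{K}})]$. An instrument is measure-and-prepare if it has the form $\varrho\mapsto\mathrm{tr}[\mathsf{A}(x)\varrho]\xi_x$ for a POVM $\mathsf{A}$ and states $\xi_x$. *)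

theory Defs
  imports Complex_Main "Jordan_Normal_Form.Matrix"
begin

text \<open>Finite-dimensional complex Hilbert spaces are modelled as C^n; operators
  H -> K (H = C^n, K = C^m) are complex matrices in carrier_mat m n.
  Tensor products C^a (x) C^m are C^(a*m) with basis index (i,p) |-> i*m+p.\<close>

definition adj :: "complex mat \<Rightarrow> complex mat" where
  "adj A = mat (dim_col A) (dim_row A) (\<lambda>(i,j). cnj (A $$ (j,i)))"

definition ctrace :: "complex mat \<Rightarrow> complex" where
  "ctrace A = (\<Sum>i<dim_row A. A $$ (i,i))"

definition psd :: "nat \<Rightarrow> complex mat \<Rightarrow> bool" where
  "psd n A \<longleftrightarrow> A \<in> carrier_mat n n \<and>
     (\<forall>v \<in> carrier_vec n. let q = (\<Sum>i<n. \<Sum>j<n. cnj (v $ i) * A $$ (i,j) * v $ j)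
                           in Im q = 0 \<and> Re q \<ge> 0)"

definition density :: "nat \<Rightarrow> complex mat \<Rightarrow> bool" where
  "density n \<rho> \<longleftrightarrow> psd n \<rho> \<and> ctrace \<rho> = 1"

definition kron :: "complex mat \<Rightarrow> complex mat \<Rightarrow> complex mat" where
  "kron A B = mat (dim_row A * dim_row B) (dim_col A * dim_col B)
     (\<lambda>(i,j). A $$ (i div dim_row B, j div dim_col B) * B $$ (i mod dim_row B, j mod dim_col B))"

definition ptrace1 :: "nat \<Rightarrow> nat \<Rightarrow> complex mat \<Rightarrow> complex mat" where
  "ptrace1 a m X = mat m m (\<lambda>(p,q). \<Sum>i<a. X $$ (i*m+p, i*m+q))"

definition ptrace2 :: "nat \<Rightarrow> nat \<Rightarrow> complex mat \<Rightarrow> complex mat" where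
  "ptrace2 a m X = mat a a (\<lambda>(i,j). \<Sum>p<m. X $$ (i*m+p, j*m+p))"

definition msqrt :: "nat \<Rightarrow> complex mat \<Rightarrow> complex mat" where
  "msqrt n A = (THE S. psd n S \<and> S * S = A)"

definition lin_map :: "nat \<Rightarrow> nat \<Rightarrow> (complex mat \<Rightarrow> complex mat) \<Rightarrow> bool" where
  "lin_map n m \<Phi> \<longleftrightarrow>
     (\<forall>A \<in> carrier_mat n n. \<Phi> A \<in> carrier_mat m m) \<and>
     (\<forall>A \<in> carrier_mat n n. \<forall>B \<in> carrier_mat n n. \<Phi> (A + B) = \<Phi> A + \<Phi> B) \<and>
     (\<forall>A \<in> carrier_mat n n. \<forall>c. \<Phi> (c \<cdot>\<^sub>m A) = c \<cdot>\<^sub>m \<Phi> A)"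

text \<open>(id_k (x) Phi) applied to a k*n x k*n matrix, blockwise.\<close>
definition ampl :: "nat \<Rightarrow> nat \<Rightarrow> nat \<Rightarrow> (complex mat \<Rightarrow> complex mat) \<Rightarrow> complex mat \<Rightarrow> complex mat" where
  "ampl k n m \<Phi> X = mat (k*m) (k*m) (\<lambda>(r,s).
      \<Phi> (mat n n (\<lambda>(p,q). X $$ ((r div m)*n + p, (s div m)*n + q))) $$ (r mod m, s mod m))"

definition comp_pos :: "nat \<Rightarrow> nat \<Rightarrow> (complex mat \<Rightarrow> complex mat) \<Rightarrow> bool" where
  "comp_pos n m \<Phi> \<longleftrightarrow> (\<forall>k. \<forall>X. psd (k*n) X \<longrightarrow> psd (k*m) (ampl k n m \<Phi> X))"

definition operation :: "nat \<Rightarrow> nat \<Rightarrow> (complex mat \<Rightarrow> complex mat) \<Rightarrow> bool" where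
  "operation n m \<Phi> \<longleftrightarrow> lin_map n m \<Phi> \<and> comp_pos n m \<Phi> \<and>
     (\<forall>\<rho>. psd n \<rho> \<longrightarrow> Re (ctrace (\<Phi> \<rho>)) \<le> Re (ctrace \<rho>))"

text \<open>Instrument in Ins(Omega, C^n, C^m); Omega is the finite type 'o.\<close>
definition instrument :: "nat \<Rightarrow> nat \<Rightarrow> ('o::finite \<Rightarrow> complex mat \<Rightarrow> complex mat) \<Rightarrow> bool" where
  "instrument n m I \<longleftrightarrow> (\<forall>x. operation n m (I x)) \<and>
     (\<forall>\<rho> \<in> carrier_mat n n. (\<Sum>x\<in>UNIV. ctrace (I x \<rho>)) = ctrace \<rho>)"

definition povm :: "nat \<Rightarrow> ('o::finite \<Rightarrow> complex mat) \<Rightarrow> bool" where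
  "povm n E \<longleftrightarrow> (\<forall>x. psd n (E x)) \<and> mat n n (\<lambda>(i,j). \<Sum>x\<in>UNIV. E x $$ (i,j)) = 1\<^sub>m n"

definition induced_povm :: "nat \<Rightarrow> ('o::finite \<Rightarrow> complex mat \<Rightarrow> complex mat) \<Rightarrow> 'o \<Rightarrow> complex mat" where
  "induced_povm n I x = (THE A. A \<in> carrier_mat n n \<and>
      (\<forall>\<rho> \<in> carrier_mat n n. ctrace (A * \<rho>) = ctrace (I x \<rho>)))"

definition indecomposable :: "nat \<Rightarrow> nat \<Rightarrow> ('o::finite \<Rightarrow> complex mat \<Rightarrow> complex mat) \<Rightarrow> bool" where
  "indecomposable n m I \<longleftrightarrow> (\<forall>x. (\<exists>\<rho> \<in> carrier_mat n n. I x \<rho> \<noteq> 0\<^sub>m m m) \<longrightarrow>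
      (\<exists>K \<in> carrier_mat m n. \<forall>\<rho> \<in> carrier_mat n n. I x \<rho> = K * \<rho> * adj K))"

definition dilation :: "nat \<Rightarrow> nat \<Rightarrow> ('o::finite \<Rightarrow> complex mat \<Rightarrow> complex mat)
    \<Rightarrow> nat \<Rightarrow> complex mat \<Rightarrow> ('o \<Rightarrow> complex mat) \<Rightarrow> bool" where
  "dilation n m I a W E \<longleftrightarrow> W \<in> carrier_mat (a*m) n \<and> adj W * W = 1\<^sub>m n \<and> povm a E \<and>
     (\<forall>x. \<forall>\<rho> \<in> carrier_mat n n.
        I x \<rho> = ptrace1 a m (W * \<rho> * adj W * kron (E x) (1\<^sub>m m)))"

definition complementary :: "nat \<Rightarrow> nat \<Rightarrow> complex mat \<Rightarrow> ('o \<Rightarrow> complex mat) \<Rightarrow> 'o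
    \<Rightarrow> complex mat \<Rightarrow> complex mat" where
  "complementary a m W E x \<rho> =
     ptrace2 a m (kron (msqrt a (E x)) (1\<^sub>m m) * W * \<rho> * adj W * kron (msqrt a (E x)) (1\<^sub>m m))"

definition orthonormal_basis :: "nat \<Rightarrow> ('o::finite \<Rightarrow> complex vec) \<Rightarrow> bool" where
  "orthonormal_basis a \<phi> \<longleftrightarrow> (\<forall>x. \<phi> x \<in> carrier_vec a) \<and>
     (\<forall>x y. (\<Sum>i<a. cnj (\<phi> x $ i) * \<phi> y $ i) = (if x = y then 1 else 0)) \<and>
     (\<forall>v \<in> carrier_vec a. \<exists>c. v = finsum_vec TYPE(complex) a (\<lambda>x. c x \<cdot>\<^sub>v \<phi> x) UNIV)"

definition ketbra :: "complex vec \<Rightarrow> complex mat" where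
  "ketbra v = mat (dim_vec v) (dim_vec v) (\<lambda>(i,j). v $ i * cnj (v $ j))"

end

theory Submission
  imports Defs
begin

lemma mult_entry: "A \<in> carrier_mat nr nk \<Longrightarrow> B \<in> carrier_mat nk nc \<Longrightarrow> i < nr \<Longrightarrow> j < nc \<Longrightarrow>
   (A*B) $$ (i,j) = (\<Sum>l<nk. A$$(i,l) * B$$(l,j))"
  by (auto simp: scalar_prod_def lessThan_atLeast0 intro!: sum.cong)

lemma adj_carrier: "A \<in> carrier_mat r c \<Longrightarrow> adj A \<in> carrier_mat c r"
  by (auto simp: adj_def)

lemma adj_entry: "A \<in> carrier_mat r c \<Longrightarrow> i < c \<Longrightarrow> j < r \<Longrightarrow> adj A $$ (i,j) = cnj (A $$ (j,i))"
  by (auto simp: adj_def)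

lemma ctrace_comm: "A \<in> carrier_mat p q \<Longrightarrow> B \<in> carrier_mat q p \<Longrightarrow> ctrace (A*B) = ctrace (B*A)"
proof -
  assume A: "A \<in> carrier_mat p q" and B: "B \<in> carrier_mat q p"
  have "ctrace (A*B) = (\<Sum>i<p. \<Sum>l<q. A$$(i,l) * B$$(l,i))"
    unfolding ctrace_def using A B by (intro sum.cong) (auto simp: mult_entry[OF A B] index_mult_mat(2,3) simp del: index_mult_mat(1))
  also have "\<dots> = (\<Sum>l<q. \<Sum>i<p. B$$(l,i) * A$$(i,l))"
    by (subst sum.swap) (simp add: mult.commute)
  also have "\<dots> = ctrace (B*A)"
    unfolding ctrace_def using A B by (intro sum.cong) (auto simp: mult_entry[OF B A] index_mult_mat(2,3) simp del: index_mult_mat(1))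
  finally show ?thesis .
qed

definition U :: "nat \<Rightarrow> nat \<Rightarrow> nat \<Rightarrow> complex mat" where
  "U n j i = mat n n (\<lambda>(k,l). if k=j \<and> l=i then 1 else 0)"

lemma ctrace_U: "A \<in> carrier_mat n n \<Longrightarrow> i < n \<Longrightarrow> j < n \<Longrightarrow> ctrace (A * U n j i) = A $$ (i,j)"
proof -
  assume A: "A \<in> carrier_mat n n" and i: "i < n" and j: "j < n"
  have U: "U n j i \<in> carrier_mat n n" by (simp add: U_def)
  have "ctrace (A * U n j i) = (\<Sum>k<n. \<Sum>l<n. A$$(k,l) * (if l=j \<and> k=i then 1 else 0))"
    unfolding ctrace_def using A U by (intro sum.cong) (auto simp: mult_entry[OF A U, unfolded U_def] U_def index_mult_mat(2,3) simp del: index_mult_mat(1))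
  also have "\<dots> = (\<Sum>k<n. if k = i then A$$(k,j) else 0)"
    by (rule sum.cong, simp) (auto simp: if_distrib j cong: if_cong)
  also have "\<dots> = A $$ (i,j)" using i by simp
  finally show ?thesis .
qed

lemma sum_split: "(\<Sum>r<a*m. h r) = (\<Sum>t<a. \<Sum>p<m. h (t*m+p::nat))"
proof (induction a)
  case (Suc a)
  have "(\<Sum>r<Suc a*m. h r) = (\<Sum>r<a*m. h r) + (\<Sum>r\<in>{a*m..<a*m+m}. h r)"
    by (simp add: lessThan_atLeast0 add.commute sum.atLeastLessThan_concat)
  also have "(\<Sum>r\<in>{a*m..<a*m+m}. h r) = (\<Sum>p<m. h (a*m+p))"
    using sum.shift_bounds_nat_ivl[of h 0 "a*m" m] by (simp add: lessThan_atLeast0 add.commute)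
  finally show ?case using Suc by simp
qed simp

lemma mult_ifL: "(if P then a else 0) * (b::complex) = (if P then a*b else 0)" by simp
lemma mult_ifR: "(b::complex) * (if P then a else 0) = (if P then b*a else 0)" by simp
lemma cnj_if0: "cnj (if P then a else 0) = (if P then cnj a else 0)" by simp

lemma qform2:
  assumes "i < n" "j < n" "i \<noteq> j"
  shows "(\<Sum>k<n. \<Sum>l<n. cnj ((if k = i then 1 else 0) + (if k = j then c else 0)) * S $$ (k,l) *
            ((if l = i then 1 else 0) + (if l = j then c else 0)))
       = S$$(i,i) + c * S$$(i,j) + cnj c * S$$(j,i) + cnj c * c * S$$(j,j)"
  using assms by (simp add: ring_distribs sum.distrib mult_ifL mult_ifR cnj_if0)

lemma qform1:
  assumes "i < n"
  shows "(\<Sum>k<n. \<Sum>l<n. cnj (if k = i then 1 else 0) * S $$ (k,l) * (if l = i then 1 else 0)) = S$$(i,i)"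
  using assms by (simp add: mult_ifL mult_ifR cnj_if0)

lemma psdq:
  assumes "psd n S"
  shows "Im (\<Sum>k<n. \<Sum>l<n. cnj (f k) * S $$ (k,l) * f l) = 0 \<and>
         Re (\<Sum>k<n. \<Sum>l<n. cnj (f k) * S $$ (k,l) * f l) \<ge> 0"
proof -
  have v: "vec n f \<in> carrier_vec n" by simp
  have "(\<Sum>k<n. \<Sum>l<n. cnj (vec n f $ k) * S $$ (k,l) * vec n f $ l) =
        (\<Sum>k<n. \<Sum>l<n. cnj (f k) * S $$ (k,l) * f l)"
    by (intro sum.cong) auto
  moreover have "let q = (\<Sum>k<n. \<Sum>l<n. cnj (vec n f $ k) * S $$ (k,l) * vec n f $ l) in Im q = 0 \<and> Re q \<ge> 0"
    using assms v unfolding psd_def by blast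
  ultimately show ?thesis unfolding Let_def by simp
qed

lemma psd_herm:
  assumes "psd n S" "i < n" "j < n"
  shows "S $$ (j,i) = cnj (S $$ (i,j))"
proof (cases "i = j")
  case True
  have "Im (S$$(i,i)) = 0"
    using psdq[OF assms(1), of "\<lambda>k. if k = i then 1 else 0"] qform1[OF assms(2), of S] by simp
  then show ?thesis using True by (simp add: complex_eq_iff)
next
  case False
  have ii: "Im (S$$(i,i)) = 0"
    using psdq[OF assms(1), of "\<lambda>k. if k = i then 1 else 0"] qform1[OF assms(2), of S] by simp
  have jj: "Im (S$$(j,j)) = 0"
    using psdq[OF assms(1), of "\<lambda>k. if k = j then 1 else 0"] qform1[OF assms(3), of S] by simp
  have a: "Im (S$$(i,i) + 1 * S$$(i,j) + cnj 1 * S$$(j,i) + cnj 1 * 1 * S$$(j,j)) = 0"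
    using psdq[OF assms(1), of "\<lambda>k. (if k = i then 1 else 0) + (if k = j then 1 else 0)"]
      qform2[OF assms(2,3) False, of 1 S] by (simp only:)
  have b: "Im (S$$(i,i) + \<i> * S$$(i,j) + cnj \<i> * S$$(j,i) + cnj \<i> * \<i> * S$$(j,j)) = 0"
    using psdq[OF assms(1), of "\<lambda>k. (if k = i then 1 else 0) + (if k = j then \<i> else 0)"]
      qform2[OF assms(2,3) False, of \<i> S] by (simp only:)
  show ?thesis using ii jj a b by (simp add: complex_eq_iff)
qed

definition P :: "nat \<Rightarrow> nat \<Rightarrow> complex mat" where
  "P a t = mat a a (\<lambda>(i,j). if i = t \<and> j = t then 1 else 0)"

lemma P_carrier: "P a t \<in> carrier_mat a a" by (simp add: P_def)

lemma psd_P: assumes "t < a" shows "psd a (P a t)"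
  unfolding psd_def
proof (intro conjI ballI P_carrier)
  fix v :: "complex vec"
  have "(\<Sum>i<a. \<Sum>j<a. cnj (v $ i) * P a t $$ (i,j) * v $ j) =
     (\<Sum>i<a. \<Sum>j<a. if i = t then (if j = t then cnj (v $ i) * v $ j else 0) else 0)"
    by (intro sum.cong refl) (simp add: P_def)
  also have "\<dots> = (\<Sum>i<a. if i = t then cnj (v $ i) * v $ t else 0)"
    using assms by (intro sum.cong refl) auto
  also have "\<dots> = cnj (v $ t) * v $ t" using assms by simp
  also have "\<dots> = of_real ((cmod (v $ t))^2)" by (metis complex_norm_square of_real_power mult.commute)
  finally show "let q = (\<Sum>i<a. \<Sum>j<a. cnj (v $ i) * P a t $$ (i,j) * v $ j) in Im q = 0 \<and> 0 \<le> Re q"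
    by simp
qed

lemma PP: "P a t * P a t = P a t"
proof (rule eq_matI)
  fix i j assume i: "i < dim_row (P a t)" and j: "j < dim_col (P a t)"
  then have ij: "i < a" "j < a" by (auto simp: P_def)
  have "(P a t * P a t) $$ (i,j) = (\<Sum>l<a. P a t $$ (i,l) * P a t $$ (l,j))"
    using mult_entry[OF P_carrier P_carrier ij] .
  also have "\<dots> = (\<Sum>l<a. if l = t then (if i = t \<and> j = t then 1 else 0) else 0)"
    by (intro sum.cong refl) (auto simp: P_def ij)
  also have "\<dots> = P a t $$ (i,j)" using ij by (simp add: P_def)
  finally show "(P a t * P a t) $$ (i,j) = P a t $$ (i,j)" .
qed (auto simp: P_def)

lemma sqrt_unique:
  assumes S: "psd a S" and SS: "S * S = P a t" and t: "t < a"
  shows "S = P a t"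
proof -
  have Sc: "S \<in> carrier_mat a a" using S by (simp add: psd_def)
  have herm: "\<And>i j. i < a \<Longrightarrow> j < a \<Longrightarrow> S $$ (j,i) = cnj (S $$ (i,j))"
    using psd_herm[OF S] by blast
  have row0: "S $$ (k,l) = 0" if k: "k < a" "k \<noteq> t" and l: "l < a" for k l
  proof -
    have "(S*S) $$ (k,k) = 0" using SS k by (simp add: P_def)
    moreover have "(S*S) $$ (k,k) = (\<Sum>j<a. S$$(k,j) * S$$(j,k))"
      using mult_entry[OF Sc Sc k(1) k(1)] .
    moreover have "(\<Sum>j<a. S$$(k,j) * S$$(j,k)) = of_real (\<Sum>j<a. (cmod (S$$(k,j)))^2)"
    proof -
      have "\<And>j. j < a \<Longrightarrow> S$$(k,j) * S$$(j,k) = of_real ((cmod (S$$(k,j)))^2)"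
        using herm[OF k(1)] by (metis complex_norm_square of_real_power)
      then show ?thesis by (simp add: of_real_sum)
    qed
    ultimately have "complex_of_real (\<Sum>j<a. (cmod (S$$(k,j)))^2) = 0" by metis
    then have "(\<Sum>j<a. (cmod (S$$(k,j)))^2) = 0" by (simp only: of_real_eq_0_iff)
    then have "\<forall>j\<in>{..<a}. (cmod (S$$(k,j)))^2 = 0"
      by (subst (asm) sum_nonneg_eq_0_iff) auto
    then show ?thesis using l by auto
  qed
  have z: "S $$ (k,l) = 0" if "k < a" "l < a" "\<not> (k = t \<and> l = t)" for k l
  proof (cases "k = t")
    case True
    then have "l \<noteq> t" using that by auto
    then have "S $$ (l,k) = 0" using row0 that by auto
    then show ?thesis using herm[of l k] that by simp
  next
    case False then show ?thesis using row0 that by auto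
  qed
  have "(S*S) $$ (t,t) = (\<Sum>j<a. S$$(t,j) * S$$(j,t))"
    using mult_entry[OF Sc Sc t t] .
  also have "\<dots> = (\<Sum>j<a. if j = t then S$$(t,t) * S$$(t,t) else 0)"
    by (rule sum.cong) (auto simp: z t)
  also have "\<dots> = S$$(t,t) * S$$(t,t)" using t by simp
  finally have sq: "S$$(t,t) * S$$(t,t) = 1" using SS t by (simp add: P_def)
  have "Im (S$$(t,t)) = 0 \<and> Re (S$$(t,t)) \<ge> 0"
    using psdq[OF S, of "\<lambda>k. if k = t then 1 else 0"] qform1[OF t, of S] by (simp only:)
  then have e: "S$$(t,t) = of_real (Re (S$$(t,t)))" and nn: "Re (S$$(t,t)) \<ge> 0"
    by (auto simp: complex_eq_iff)
  have "of_real (Re (S$$(t,t)) * Re (S$$(t,t))) = (1::complex)"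
    using sq e by (metis of_real_mult)
  then have "Re (S$$(t,t)) * Re (S$$(t,t)) = 1" by (metis of_real_eq_1_iff)
  then have "Re (S$$(t,t)) = 1" using nn
    by (metis abs_of_nonneg abs_square_eq_1 power2_eq_square)
  then have tt: "S$$(t,t) = 1" using e by simp
  show ?thesis
  proof (rule eq_matI)
    fix i j assume "i < dim_row (P a t)" "j < dim_col (P a t)"
    then have ij: "i < a" "j < a" by (auto simp: P_def)
    show "S $$ (i,j) = P a t $$ (i,j)"
      by (cases "i = t \<and> j = t") (auto simp: P_def z ij tt t)
  qed (use Sc in \<open>auto simp: P_def\<close>)
qed

lemma msqrt_P: "t < a \<Longrightarrow> msqrt a (P a t) = P a t"
  unfolding msqrt_def
  by (rule the_equality) (auto simp: psd_P PP sqrt_unique)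

lemma ctrace_KrK: "K \<in> carrier_mat m n \<Longrightarrow> \<rho> \<in> carrier_mat n n \<Longrightarrow>
   ctrace (K * \<rho> * adj K) = ctrace (adj K * K * \<rho>)"
proof -
  assume K: "K \<in> carrier_mat m n" and r: "\<rho> \<in> carrier_mat n n"
  have aK: "adj K \<in> carrier_mat n m" using adj_carrier[OF K] .
  have "ctrace (K * \<rho> * adj K) = ctrace (K * (\<rho> * adj K))" using K r aK by simp
  also have "\<dots> = ctrace ((\<rho> * adj K) * K)" using K r aK by (intro ctrace_comm) auto
  also have "\<dots> = ctrace (\<rho> * (adj K * K))" using K r aK by simp
  also have "\<dots> = ctrace ((adj K * K) * \<rho>)" using K r aK by (intro ctrace_comm) auto
  finally show ?thesis .
qed

lemma mat_eq_by_trace: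
  assumes A: "A \<in> carrier_mat n n" and B: "B \<in> carrier_mat n n"
    and h: "\<And>\<rho>. \<rho> \<in> carrier_mat n n \<Longrightarrow> ctrace (A * \<rho>) = ctrace (B * \<rho>)"
  shows "A = B"
proof (rule eq_matI)
  fix i j assume "i < dim_row B" "j < dim_col B"
  then have ij: "i < n" "j < n" using B by auto
  have "U n j i \<in> carrier_mat n n" by (simp add: U_def)
  from h[OF this] show "A $$ (i,j) = B $$ (i,j)" using ctrace_U[OF A ij] ctrace_U[OF B ij] by simp
qed (use A B in auto)

lemma diag_right:
  assumes M: "M \<in> carrier_mat N N" and D: "D \<in> carrier_mat N N"
    and d: "\<And>k s. k < N \<Longrightarrow> s < N \<Longrightarrow> D $$ (k,s) = (if k = s then d s else 0)"
    and r: "r < N" and s: "s < N"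
  shows "(M * D) $$ (r,s) = M $$ (r,s) * d s"
proof -
  have "(M * D) $$ (r,s) = (\<Sum>k<N. M$$(r,k) * D$$(k,s))" using mult_entry[OF M D r s] .
  also have "\<dots> = (\<Sum>k<N. if k = s then M$$(r,k) * d s else 0)"
    by (intro sum.cong refl) (simp add: d s)
  also have "\<dots> = M $$ (r,s) * d s" using s by simp
  finally show ?thesis .
qed

lemma diag_left:
  assumes M: "M \<in> carrier_mat N N" and D: "D \<in> carrier_mat N N"
    and d: "\<And>k s. k < N \<Longrightarrow> s < N \<Longrightarrow> D $$ (k,s) = (if k = s then d s else 0)"
    and r: "r < N" and s: "s < N"
  shows "(D * M) $$ (r,s) = d r * M $$ (r,s)"
proof -
  have "(D * M) $$ (r,s) = (\<Sum>k<N. D$$(r,k) * M$$(k,s))" using mult_entry[OF D M r s] .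
  also have "\<dots> = (\<Sum>k<N. if k = r then d r * M$$(k,s) else 0)"
    by (intro sum.cong refl) (auto simp: d r)
  also have "\<dots> = d r * M $$ (r,s)" using r by simp
  finally show ?thesis .
qed

lemma kron_P_entry:
  assumes k: "k < a*m" and s: "s < a*m"
  shows "kron (P a t) (1\<^sub>m m) $$ (k,s) = (if k = s then (if s div m = t then 1 else 0) else 0)"
proof -
  have m: "m > 0" using k by (cases m) auto
  have kd: "k div m < a" "s div m < a" using k s by (auto simp: less_mult_imp_div_less mult.commute)
  have km: "k mod m < m" "s mod m < m" using m by auto
  have eq: "(k = s) = (k div m = s div m \<and> k mod m = s mod m)"
    by (metis div_mult_mod_eq)
  show ?thesis
    unfolding kron_def using k s kd km by (auto simp: P_def eq)
qed

lemma kron_P_carrier: "kron (P a t) (1\<^sub>m m) \<in> carrier_mat (a*m) (a*m)"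
  by (simp add: kron_def P_def)

lemma W_entry:
  fixes K :: "nat \<Rightarrow> complex mat"
  assumes K: "\<And>t. K t \<in> carrier_mat m n" and r: "\<rho> \<in> carrier_mat n n"
    and W: "W = mat (a*m) n (\<lambda>(r,j). K (r div m) $$ (r mod m, j))"
    and i: "i < a*m" and j: "j < a*m"
  shows "(W * \<rho> * adj W) $$ (i,j) = (K (i div m) * \<rho> * adj (K (j div m))) $$ (i mod m, j mod m)"
proof -
  have m: "m > 0" using i by (cases m) auto
  have Wc: "W \<in> carrier_mat (a*m) n" using W by simp
  have aW: "adj W \<in> carrier_mat n (a*m)" using adj_carrier[OF Wc] .
  have Wr: "W * \<rho> \<in> carrier_mat (a*m) n" using Wc r by simp
  have Kr: "K t * \<rho> \<in> carrier_mat m n" for t using K r by (metis mult_carrier_mat)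
  have aK: "adj (K t) \<in> carrier_mat n m" for t using adj_carrier[OF K] .
  have im: "i mod m < m" "j mod m < m" using m by auto
  have row: "(W * \<rho>) $$ (i,k) = (K (i div m) * \<rho>) $$ (i mod m, k)" if k: "k < n" for k
  proof -
    have "(W * \<rho>) $$ (i,k) = (\<Sum>l<n. W$$(i,l) * \<rho>$$(l,k))" using mult_entry[OF Wc r i k] .
    also have "\<dots> = (\<Sum>l<n. K (i div m) $$ (i mod m, l) * \<rho>$$(l,k))"
      by (intro sum.cong refl) (simp add: W i)
    also have "\<dots> = (K (i div m) * \<rho>) $$ (i mod m, k)"
      using mult_entry[OF K r im(1) k] by simp
    finally show ?thesis .
  qed
  have "(W * \<rho> * adj W) $$ (i,j) = (\<Sum>k<n. (W * \<rho>)$$(i,k) * adj W $$ (k,j))"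
    using mult_entry[OF Wr aW i j] .
  also have "\<dots> = (\<Sum>k<n. (K (i div m) * \<rho>) $$ (i mod m, k) * adj (K (j div m)) $$ (k, j mod m))"
  proof (intro sum.cong refl)
    fix k assume "k \<in> {..<n}"
    then have k: "k < n" by simp
    have "W $$ (j,k) = K (j div m) $$ (j mod m, k)" using j k W by simp
    then show "(W * \<rho>)$$(i,k) * adj W $$ (k,j) = (K (i div m) * \<rho>) $$ (i mod m, k) * adj (K (j div m)) $$ (k, j mod m)"
      using row[OF k] adj_entry[OF Wc k j] adj_entry[OF K k im(2)] by simp
  qed
  also have "\<dots> = (K (i div m) * \<rho> * adj (K (j div m))) $$ (i mod m, j mod m)"
    using mult_entry[OF Kr aK im] by simp
  finally show ?thesis .
qed

theorem lemma1:
  fixes n m :: nat and I :: "'o::finite \<Rightarrow> complex mat \<Rightarrow> complex mat"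
  assumes "instrument n m I" and "indecomposable n m I"
  shows "\<exists>a W E \<phi>. dilation n m I a W E \<and> orthonormal_basis a \<phi> \<and>
           (\<forall>x. \<forall>\<rho>. density n \<rho> \<longrightarrow>
              complementary a m W E x \<rho> = ctrace (induced_povm n I x * \<rho>) \<cdot>\<^sub>m ketbra (\<phi> x))"
proof -
  define a where "a = card (UNIV :: 'o set)"
  obtain f :: "'o \<Rightarrow> nat" where bij: "bij_betw f UNIV {..<a}"
    using ex_bij_betw_finite_nat[of "UNIV :: 'o set"] unfolding a_def by (auto simp: lessThan_atLeast0)
  define g where "g = inv_into UNIV f"
  have fa: "f x < a" for x using bij by (auto simp: bij_betw_def)
  have gf: "g (f x) = x" for x using bij unfolding g_def by (simp add: bij_betw_def)
  have fg: "t < a \<Longrightarrow> f (g t) = t" for t using bij unfolding g_def by (simp add: bij_betw_def f_inv_into_f)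
  have feq: "t < a \<Longrightarrow> (f x = t) = (x = g t)" for x t using fg gf by auto
  have sum_f: "(\<Sum>x\<in>UNIV. h x) = (\<Sum>t<a. h (g t))" for h :: "'o \<Rightarrow> complex"
    using sum.reindex_bij_betw[OF bij, of "\<lambda>t. h (g t)"] by (simp add: gf)
  have sum_delta_f: "t < a \<Longrightarrow> (\<Sum>x\<in>UNIV. if f x = t then h x else 0) = h (g t)" for t and h :: "'o \<Rightarrow> complex"
    by (simp add: feq)
  have "\<forall>x. \<exists>K. K \<in> carrier_mat m n \<and> (\<forall>\<rho> \<in> carrier_mat n n. I x \<rho> = K * \<rho> * adj K)"
  proof
    fix x
    show "\<exists>K. K \<in> carrier_mat m n \<and> (\<forall>\<rho> \<in> carrier_mat n n. I x \<rho> = K * \<rho> * adj K)"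
    proof (cases "\<exists>\<rho> \<in> carrier_mat n n. I x \<rho> \<noteq> 0\<^sub>m m m")
      case True
      then show ?thesis using assms(2) unfolding indecomposable_def by blast
    next
      case False
      have "0\<^sub>m m n * \<rho> * adj (0\<^sub>m m n) = 0\<^sub>m m m" if "\<rho> \<in> carrier_mat n n" for \<rho>
        using that adj_carrier[of "0\<^sub>m m n" m n] by simp
      then show ?thesis using False by (intro exI[of _ "0\<^sub>m m n"]) auto
    qed
  qed
  then obtain K where K: "\<And>x. K x \<in> carrier_mat m n"
    and IK: "\<And>x \<rho>. \<rho> \<in> carrier_mat n n \<Longrightarrow> I x \<rho> = K x * \<rho> * adj (K x)"
    by metis
  have aK: "adj (K x) \<in> carrier_mat n m" for x using adj_carrier[OF K] .
  have KK: "adj (K x) * K x \<in> carrier_mat n n" for x using aK K by (metis mult_carrier_mat)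
  have povmK: "induced_povm n I x = adj (K x) * K x" for x
    unfolding induced_povm_def
  proof (rule the_equality)
    show "adj (K x) * K x \<in> carrier_mat n n \<and> (\<forall>\<rho>\<in>carrier_mat n n. ctrace (adj (K x) * K x * \<rho>) = ctrace (I x \<rho>))"
      using KK IK ctrace_KrK[OF K] by simp
  next
    fix A assume A: "A \<in> carrier_mat n n \<and> (\<forall>\<rho>\<in>carrier_mat n n. ctrace (A * \<rho>) = ctrace (I x \<rho>))"
    show "A = adj (K x) * K x"
      by (rule mat_eq_by_trace[of _ n]) (use A KK IK ctrace_KrK[OF K] in auto)
  qed
  have sumKK: "(\<Sum>x\<in>UNIV. (adj (K x) * K x) $$ (i,j)) = (if i = j then 1 else 0)" if ij: "i < n" "j < n" for i j
  proof -
    have Uc: "U n j i \<in> carrier_mat n n" by (simp add: U_def)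
    have "(\<Sum>x\<in>UNIV. ctrace (I x (U n j i))) = ctrace (U n j i)"
      using assms(1) Uc unfolding instrument_def by blast
    moreover have "ctrace (I x (U n j i)) = (adj (K x) * K x) $$ (i,j)" for x
      using IK[OF Uc] ctrace_KrK[OF K Uc] ctrace_U[OF KK ij] by simp
    moreover have "ctrace (U n j i) = (if i = j then 1 else 0)"
      using ctrace_U[of "1\<^sub>m n" n i j] ij Uc by simp
    ultimately show ?thesis by simp
  qed
  define Kt where "Kt t = K (g t)" for t
  define W where "W = mat (a*m) n (\<lambda>(r,j). Kt (r div m) $$ (r mod m, j))"
  define E where "E x = P a (f x)" for x
  define \<phi> :: "'o \<Rightarrow> complex vec" where "\<phi> x = unit_vec a (f x)" for x
  have Kt: "Kt t \<in> carrier_mat m n" for t unfolding Kt_def using K .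
  have Wc: "W \<in> carrier_mat (a*m) n" by (simp add: W_def)
  have aW: "adj W \<in> carrier_mat n (a*m)" using adj_carrier[OF Wc] .
  have iso: "adj W * W = 1\<^sub>m n"
  proof (rule eq_matI)
    fix i j assume "i < dim_row (1\<^sub>m n)" "j < dim_col (1\<^sub>m n)"
    then have ij: "i < n" "j < n" by auto
    have "(adj W * W) $$ (i,j) = (\<Sum>r<a*m. adj W $$ (i,r) * W $$ (r,j))"
      using mult_entry[OF aW Wc ij] .
    also have "\<dots> = (\<Sum>t<a. \<Sum>p<m. adj W $$ (i,t*m+p) * W $$ (t*m+p,j))" by (rule sum_split)
    also have "\<dots> = (\<Sum>t<a. \<Sum>p<m. adj (Kt t) $$ (i,p) * Kt t $$ (p,j))"
    proof (intro sum.cong refl)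
      fix t p assume "t \<in> {..<a}" "p \<in> {..<m}"
      then have tp: "t < a" "p < m" by auto
      have r1: "t*m+p < (t+1)*m" using tp by simp
      have r2: "(t+1)*m \<le> a*m" using tp by (intro mult_le_mono1) simp
      have r: "t*m+p < a*m" using r1 r2 by linarith
      have dm: "(t*m+p) div m = t" "(t*m+p) mod m = p" using tp by auto
      show "adj W $$ (i,t*m+p) * W $$ (t*m+p,j) = adj (Kt t) $$ (i,p) * Kt t $$ (p,j)"
        using adj_entry[OF Wc ij(1) r] adj_entry[OF Kt ij(1) tp(2)] r ij dm by (simp add: W_def)
    qed
    also have "\<dots> = (\<Sum>t<a. (adj (Kt t) * Kt t) $$ (i,j))"
      using mult_entry[OF adj_carrier[OF Kt] Kt ij] by simp
    also have "\<dots> = (\<Sum>x\<in>UNIV. (adj (K x) * K x) $$ (i,j))"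
      by (simp add: sum_f Kt_def)
    also have "\<dots> = 1\<^sub>m n $$ (i,j)" using sumKK[OF ij] ij by simp
    finally show "(adj W * W) $$ (i,j) = 1\<^sub>m n $$ (i,j)" .
  qed (use Wc aW in auto)
  have idx: "t*m+p < a*m" if tp: "t < a" "p < m" for t p
  proof -
    have r1: "t*m+p < (t+1)*m" using tp by simp
    have r2: "(t+1)*m \<le> a*m" using tp by (intro mult_le_mono1) simp
    show ?thesis using r1 r2 by linarith
  qed
  have povm: "povm a E"
    unfolding povm_def
  proof (intro conjI allI)
    show "psd a (E x)" for x unfolding E_def using psd_P[OF fa] .
    show "mat a a (\<lambda>(i,j). \<Sum>x\<in>UNIV. E x $$ (i,j)) = 1\<^sub>m a"
    proof (rule eq_matI)
      fix i j assume "i < dim_row (1\<^sub>m a)" "j < dim_col (1\<^sub>m a)"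
      then have ij: "i < a" "j < a" by auto
      have "(\<Sum>x\<in>UNIV. E x $$ (i,j)) = (\<Sum>x\<in>UNIV. if f x = i then (if i = j then 1 else 0) else 0)"
        by (intro sum.cong refl) (auto simp: E_def P_def ij)
      also have "\<dots> = (if i = j then 1 else 0)" using sum_delta_f[OF ij(1)] by simp
      finally show "mat a a (\<lambda>(i,j). \<Sum>x\<in>UNIV. E x $$ (i,j)) $$ (i,j) = 1\<^sub>m a $$ (i,j)"
        using ij by simp
    qed auto
  qed
  have Y: "(W * \<rho> * adj W) $$ (i,j) = (Kt (i div m) * \<rho> * adj (Kt (j div m))) $$ (i mod m, j mod m)"
    if "\<rho> \<in> carrier_mat n n" "i < a*m" "j < a*m" for \<rho> i j
    using W_entry[OF Kt that(1) W_def that(2,3)] .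
  have D: "kron (E x) (1\<^sub>m m) $$ (k,s) = (if k = s then (if s div m = f x then 1 else 0) else 0)"
    if "k < a*m" "s < a*m" for x k s
    unfolding E_def using kron_P_entry[OF that] .
  have Dc: "kron (E x) (1\<^sub>m m) \<in> carrier_mat (a*m) (a*m)" for x
    unfolding E_def by (rule kron_P_carrier)
  have Yc: "W * \<rho> * adj W \<in> carrier_mat (a*m) (a*m)" if "\<rho> \<in> carrier_mat n n" for \<rho>
    using Wc aW that by (metis mult_carrier_mat)
  have dil: "I x \<rho> = ptrace1 a m (W * \<rho> * adj W * kron (E x) (1\<^sub>m m))"
    if r: "\<rho> \<in> carrier_mat n n" for x \<rho>
  proof (rule eq_matI)
    fix p q assume "p < dim_row (ptrace1 a m (W * \<rho> * adj W * kron (E x) (1\<^sub>m m)))"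
      "q < dim_col (ptrace1 a m (W * \<rho> * adj W * kron (E x) (1\<^sub>m m)))"
    then have pq: "p < m" "q < m" by (auto simp: ptrace1_def)
    have "ptrace1 a m (W * \<rho> * adj W * kron (E x) (1\<^sub>m m)) $$ (p,q)
        = (\<Sum>t<a. (W * \<rho> * adj W * kron (E x) (1\<^sub>m m)) $$ (t*m+p, t*m+q))"
      using pq by (simp add: ptrace1_def)
    also have "\<dots> = (\<Sum>t<a. if t = f x then (K x * \<rho> * adj (K x)) $$ (p,q) else 0)"
    proof (intro sum.cong refl)
      fix t assume "t \<in> {..<a}"
      then have t: "t < a" by simp
      have dm: "(t*m+p) div m = t" "(t*m+p) mod m = p" "(t*m+q) div m = t" "(t*m+q) mod m = q"
        using pq by auto
      have "(W * \<rho> * adj W * kron (E x) (1\<^sub>m m)) $$ (t*m+p, t*m+q)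
          = (W * \<rho> * adj W) $$ (t*m+p, t*m+q) * (if (t*m+q) div m = f x then 1 else 0)"
        by (rule diag_right[OF Yc[OF r] Dc]) (use D idx[OF t pq(1)] idx[OF t pq(2)] in auto)
      also have "\<dots> = (if t = f x then (K x * \<rho> * adj (K x)) $$ (p,q) else 0)"
        using Y[OF r idx[OF t pq(1)] idx[OF t pq(2)]] dm by (auto simp: Kt_def gf)
      finally show "(W * \<rho> * adj W * kron (E x) (1\<^sub>m m)) $$ (t*m+p, t*m+q)
          = (if t = f x then (K x * \<rho> * adj (K x)) $$ (p,q) else 0)" .
    qed
    also have "\<dots> = I x \<rho> $$ (p,q)" using fa[of x] IK[OF r] by simp
    finally show "I x \<rho> $$ (p,q) = ptrace1 a m (W * \<rho> * adj W * kron (E x) (1\<^sub>m m)) $$ (p,q)" by simp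
  qed (use IK[OF r] K aK r in \<open>auto simp: ptrace1_def\<close>)
  have onb: "orthonormal_basis a \<phi>"
    unfolding orthonormal_basis_def
  proof (intro conjI allI ballI)
    show "\<phi> x \<in> carrier_vec a" for x by (simp add: \<phi>_def)
    fix x y
    have "(\<Sum>i<a. cnj (\<phi> x $ i) * \<phi> y $ i) = (\<Sum>i<a. if i = f x then (if f x = f y then 1 else 0) else 0)"
      by (intro sum.cong refl) (auto simp: \<phi>_def unit_vec_def)
    also have "\<dots> = (if f x = f y then 1 else 0)" using fa[of x] by simp
    also have "(f x = f y) = (x = y)" by (metis gf)
    finally show "(\<Sum>i<a. cnj (\<phi> x $ i) * \<phi> y $ i) = (if x = y then 1 else 0)" .
  next
    fix v :: "complex vec" assume v: "v \<in> carrier_vec a"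
    show "\<exists>c. v = finsum_vec TYPE(complex) a (\<lambda>x. c x \<cdot>\<^sub>v \<phi> x) UNIV"
    proof (intro exI[of _ "\<lambda>x. v $ f x"] eq_vecI)
      have cl: "(\<lambda>x. v $ f x \<cdot>\<^sub>v \<phi> x) \<in> UNIV \<rightarrow> carrier_vec a" by (simp add: \<phi>_def)
      show "dim_vec v = dim_vec (finsum_vec TYPE(complex) a (\<lambda>x. v $ f x \<cdot>\<^sub>v \<phi> x) UNIV)"
        using finsum_vec_closed[OF cl] v by simp
      fix i assume "i < dim_vec (finsum_vec TYPE(complex) a (\<lambda>x. v $ f x \<cdot>\<^sub>v \<phi> x) UNIV)"
      then have i: "i < a" using finsum_vec_closed[OF cl] by simp
      have "finsum_vec TYPE(complex) a (\<lambda>x. v $ f x \<cdot>\<^sub>v \<phi> x) UNIV $ i = (\<Sum>x\<in>UNIV. (v $ f x \<cdot>\<^sub>v \<phi> x) $ i)"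
        by (rule index_finsum_vec[OF _ i cl]) simp
      also have "\<dots> = (\<Sum>x\<in>UNIV. if f x = i then v $ i else 0)"
        by (intro sum.cong refl) (auto simp: \<phi>_def unit_vec_def i)
      also have "\<dots> = v $ i" using sum_delta_f[OF i, of "\<lambda>_. v $ i"] by simp
      finally show "v $ i = finsum_vec TYPE(complex) a (\<lambda>x. v $ f x \<cdot>\<^sub>v \<phi> x) UNIV $ i" by simp
    qed
  qed
  have comp: "complementary a m W E x \<rho> = ctrace (induced_povm n I x * \<rho>) \<cdot>\<^sub>m ketbra (\<phi> x)"
    if dens: "density n \<rho>" for x \<rho>
  proof -
    have r: "\<rho> \<in> carrier_mat n n" using dens by (simp add: density_def psd_def)
    define D where "D = kron (E x) (1\<^sub>m m)"
    define Yx where "Yx = W * \<rho> * adj W"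
    have Dc': "D \<in> carrier_mat (a*m) (a*m)" using Dc unfolding D_def .
    have Yc': "Yx \<in> carrier_mat (a*m) (a*m)" using Yc[OF r] unfolding Yx_def .
    have DY: "D * Yx \<in> carrier_mat (a*m) (a*m)" using Dc' Yc' by (metis mult_carrier_mat)
    have ms: "msqrt a (E x) = E x" unfolding E_def using msqrt_P[OF fa] .
    have ass: "D * W * \<rho> * adj W * D = D * Yx * D"
    proof -
      have "D*W*\<rho> = D*(W*\<rho>)" using assoc_mult_mat[OF Dc' Wc r] .
      moreover have "D*(W*\<rho>)*adj W = D*(W*\<rho>*adj W)"
        using assoc_mult_mat[OF Dc' mult_carrier_mat[OF Wc r] aW] .
      ultimately show ?thesis unfolding Yx_def by simp
    qed
    have Dd: "D $$ (k,s) = (if k = s then (if s div m = f x then 1 else 0) else 0)"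
      if "k < a*m" "s < a*m" for k s unfolding D_def using D[OF that] .
    have Ce: "(D * Yx * D) $$ (k,s) = (if k div m = f x then 1 else 0) * Yx $$ (k,s) * (if s div m = f x then 1 else 0)"
      if ks: "k < a*m" "s < a*m" for k s
      using diag_right[OF DY Dc' Dd ks] diag_left[OF Yc' Dc' Dd ks] by simp
    have ctr: "ctrace (induced_povm n I x * \<rho>) = ctrace (K x * \<rho> * adj (K x))"
      using povmK ctrace_KrK[OF K r] by simp
    have KrK: "K x * \<rho> * adj (K x) \<in> carrier_mat m m" using K aK r by (metis mult_carrier_mat)
    show ?thesis
    proof (rule eq_matI)
      fix i j assume "i < dim_row (ctrace (induced_povm n I x * \<rho>) \<cdot>\<^sub>m ketbra (\<phi> x))"
        "j < dim_col (ctrace (induced_povm n I x * \<rho>) \<cdot>\<^sub>m ketbra (\<phi> x))"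
      then have ij: "i < a" "j < a" by (auto simp: ketbra_def \<phi>_def)
      have "complementary a m W E x \<rho> $$ (i,j) = (\<Sum>p<m. (D * Yx * D) $$ (i*m+p, j*m+p))"
        unfolding complementary_def ms D_def[symmetric] ass using ij by (simp add: ptrace2_def)
      also have "\<dots> = (\<Sum>p<m. if i = f x \<and> j = f x then (K x * \<rho> * adj (K x)) $$ (p,p) else 0)"
      proof (intro sum.cong refl)
        fix p assume "p \<in> {..<m}"
        then have p: "p < m" by simp
        have dm: "(i*m+p) div m = i" "(i*m+p) mod m = p" "(j*m+p) div m = j" "(j*m+p) mod m = p"
          using p by auto
        show "(D * Yx * D) $$ (i*m+p, j*m+p) = (if i = f x \<and> j = f x then (K x * \<rho> * adj (K x)) $$ (p,p) else 0)"
          using Ce[OF idx[OF ij(1) p] idx[OF ij(2) p]] Y[OF r idx[OF ij(1) p] idx[OF ij(2) p]] dm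
          unfolding Yx_def by (auto simp: Kt_def gf)
      qed
      also have "\<dots> = (if i = f x \<and> j = f x then ctrace (K x * \<rho> * adj (K x)) else 0)"
        using K[of x] by (auto simp: ctrace_def)
      also have "\<dots> = (ctrace (induced_povm n I x * \<rho>) \<cdot>\<^sub>m ketbra (\<phi> x)) $$ (i,j)"
        using ij fa[of x] ctr by (simp add: ketbra_def \<phi>_def unit_vec_def)
      finally show "complementary a m W E x \<rho> $$ (i,j) = (ctrace (induced_povm n I x * \<rho>) \<cdot>\<^sub>m ketbra (\<phi> x)) $$ (i,j)" .
    qed (auto simp: complementary_def ptrace2_def ketbra_def \<phi>_def)
  qed
  show ?thesis
    by (rule exI[of _ a], rule exI[of _ W], rule exI[of _ E], rule exI[of _ \<phi>])
       (use Wc iso povm dil onb comp in \<open>auto simp: dilation_def\<close>)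
qed

end
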